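(* Let $n>5$ with $n\equiv 0\pmod 4$, and consider even $r\in[2,n-2]$. (i) For $r\equiv 0\pmod 4$, $E(D_n^s[r,\boldsymbol{n-r}])$ is strictly increasing in $r$; hence $E(D_n^s[n-4,\boldsymbol 4])>E(D_n^s[n-8,\boldsymbol 8])>\dots>E(D_n^s[8,\boldsymbol{n-8}])>E(D_n^s[4,\boldsymbol{n-4}])$, and the maximum over such $r$ is attained by $D_n^s[n-4,\boldsymbol 4]$ (negative cycle of length $4$). (ii) For $r\equiv 2\pmod 4$, $E(D_n^s[r,\boldsymbol{n-r}])$ is strictly decreasing in $r$; hence $E(D_n^s[2,\boldsymbol{n-2}])>E(D_n^s[6,\boldsymbol{n-6}])>\dots>E(D_n^s[n-6,\boldsymbol 6])>E(D_n^s[n-2,\boldsymbol 2])$, and the maximum over such $r$ is attained at $r=2$.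
   Context: A signed digraph (sidigraph) is a digraph in which every arc carries a sign $+1$ or $-1$; its adjacency matrix $A(S)=[a_{ij}]$ has $a_{ij}$ equal to the sign of the arc $w_iw_j$ if it exists and $0$ otherwise. If $\rho_1,\dots,\rho_n$ are the eigenvalues of $A(S)$, the energy of $S$ is $E(S)=\sum_{k=1}^n|\mathrm{Re}(\rho_k)|$. The sign of a directed cycle is the product of the signs of its arcs. For $k\ge 2$, $C_k$ denotes a directed cycle of length $k$ with sign $+1$ and $\boldsymbol{C}_k$ a directed cycle of length $k$ with sign $-1$. It is known that $E(C_k)=2\cot\frac{\pi}{k}$ if $k\equiv0\pmod 4$, $2\csc\frac{\pi}{k}$ if $k\equiv 2\pmod 4$, $\csc\frac{\pi}{2k}$ if $k$ is odd; and $E(\boldsymbol C_k)=2\csc\frac{\pi}{k}$ if $k\equiv0\pmod 4$, $2\cot\frac{\pi}{k}$ if $k\equiv 2\pmod 4$, $\csc\frac{\pi}{2k}$ if $k$ is odd. For integers $p,q\ge 2$ with $p+q\le n$, $D_n^s[p,q]$, $D_n^s[\boldsymbol p,\boldsymbol q]$, $D_n^s[\boldsymbol p,q]$, $D_n^s[p,\boldsymbol q]$ denote an $n$-vertex sidigraph whose only directed cycles are two vertex-disjoint cycles of lengths $p$ and $q$ (all other vertices lying on no directed cycle), where a bold entry indicates that the cycle of that length is negative and a non-bold entry that it is positive. Its energy is the sum of the energies of its two cycles, e.g. $E(D_n^s[p,\boldsymbol q])=E(C_p)+E(\boldsymbol C_q)$; in particular the order of the two entries does not matter. *)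

theory Defs
  imports Complex_Main
begin

definition E_pos_cycle :: "nat \<Rightarrow> real" where
  "E_pos_cycle k =
     (if k mod 4 = 0 then 2 * cot (pi / real k)
      else if k mod 4 = 2 then 2 / sin (pi / real k)
      else 1 / sin (pi / (2 * real k)))"

definition E_neg_cycle :: "nat \<Rightarrow> real" where
  "E_neg_cycle k =
     (if k mod 4 = 0 then 2 / sin (pi / real k)
      else if k mod 4 = 2 then 2 * cot (pi / real k)
      else 1 / sin (pi / (2 * real k)))"

text \<open>Energy of D_n^s[p, bold q]: positive p-cycle and negative q-cycle, vertex-disjoint,
  other vertices on no cycle; the energy is the sum of the two cycle energies.\<close>
definition E_D_pos_neg :: "nat \<Rightarrow> nat \<Rightarrow> nat \<Rightarrow> real" where
  "E_D_pos_neg n p q = E_pos_cycle p + E_neg_cycle q"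

end

theory Submission
  imports Defs
begin

lemma cos_ge_poly: fixes x::real assumes "x \<ge> 0" shows "1 - x^2/2 \<le> cos x"
proof -
  let ?f = "\<lambda>x. cos x - 1 + x^2/2"
  have d: "\<And>u. \<lbrakk>0 \<le> u; u \<le> x\<rbrakk> \<Longrightarrow> \<exists>y. (?f has_real_derivative y) (at u) \<and> y \<ge> 0"
  proof -
    fix u :: real assume "0 \<le> u"
    have "(?f has_real_derivative (u - sin u)) (at u)" by (auto intro!: derivative_eq_intros)
    thus "\<exists>y. (?f has_real_derivative y) (at u) \<and> y \<ge> 0" using sin_x_le_x[OF \<open>0 \<le> u\<close>] by auto
  qed
  have "?f 0 \<le> ?f x" by (rule DERIV_nonneg_imp_nondecreasing[where f="?f", OF assms]) (use d in auto)
  then show ?thesis by simp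
qed

lemma sin_ge_poly: fixes x::real assumes "x \<ge> 0" shows "x - x^3/6 \<le> sin x"
proof -
  let ?f = "\<lambda>x. sin x - x + x^3/6"
  have d: "\<And>u. \<lbrakk>0 \<le> u; u \<le> x\<rbrakk> \<Longrightarrow> \<exists>y. (?f has_real_derivative y) (at u) \<and> y \<ge> 0"
  proof -
    fix u :: real assume "0 \<le> u"
    have "(?f has_real_derivative (cos u - 1 + u^2/2)) (at u)" by (auto intro!: derivative_eq_intros simp: power2_eq_square)
    thus "\<exists>y. (?f has_real_derivative y) (at u) \<and> y \<ge> 0" using cos_ge_poly[OF \<open>0 \<le> u\<close>] by auto
  qed
  have "?f 0 \<le> ?f x" by (rule DERIV_nonneg_imp_nondecreasing[where f="?f", OF assms]) (use d in auto)
  then show ?thesis by simp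
qed

lemma cos_le_poly: fixes x::real assumes "x \<ge> 0" shows "cos x \<le> 1 - x^2/2 + x^4/24"
proof -
  let ?f = "\<lambda>x. 1 - x^2/2 + x^4/24 - cos x"
  have d: "\<And>u. \<lbrakk>0 \<le> u; u \<le> x\<rbrakk> \<Longrightarrow> \<exists>y. (?f has_real_derivative y) (at u) \<and> y \<ge> 0"
  proof -
    fix u :: real assume "0 \<le> u"
    have "(?f has_real_derivative (sin u - u + u^3/6)) (at u)" by (auto intro!: derivative_eq_intros simp: power2_eq_square power3_eq_cube)
    thus "\<exists>y. (?f has_real_derivative y) (at u) \<and> y \<ge> 0" using sin_ge_poly[OF \<open>0 \<le> u\<close>] by auto
  qed
  have "?f 0 \<le> ?f x" by (rule DERIV_nonneg_imp_nondecreasing[where f="?f", OF assms]) (use d in auto)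
  then show ?thesis by simp
qed

lemma key_ineq: fixes t::real assumes "0 < t" "t \<le> pi/2" shows "t^2 * cos t \<le> (sin t)^2"
proof -
  have t2: "t \<le> 2" using assms pi_less_4 by linarith
  have s0: "0 \<le> t - t^3/6"
  proof -
    have "t^2 \<le> 2^2" using t2 assms by (intro power_mono) auto
    hence "t^3 \<le> 4*t" using assms by (simp add: power3_eq_cube power2_eq_square mult.assoc[symmetric])
    thus ?thesis using assms(1) by simp
  qed
  have "(t - t^3/6)^2 \<le> (sin t)^2" using sin_ge_poly[of t] assms s0 by (intro power_mono) auto
  moreover have "t^2 * cos t \<le> t^2 * (1 - t^2/2 + t^4/24)" using cos_le_poly[of t] assms by (intro mult_left_mono) auto
  moreover have "t^2 * (1 - t^2/2 + t^4/24) \<le> (t - t^3/6)^2"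
  proof -
    have "t^2 \<le> 2^2" using t2 assms by (intro power_mono) auto
    hence "t^2 \<le> 12" by simp
    hence "t^4 * t^2 \<le> t^4 * 12" by (intro mult_left_mono) auto
    thus ?thesis by (simp add: algebra_simps power2_eq_square power3_eq_cube power4_eq_xxxx)
  qed
  ultimately show ?thesis by linarith
qed

lemma psi_dec: fixes a b::real assumes "0 < a" "a < b" "b \<le> pi/2"
  shows "cot b - 1/b < cot a - 1/a"
proof -
  let ?f = "\<lambda>t. cos t / sin t - 1/t"
  have "?f b < ?f a"
  proof (rule DERIV_neg_imp_decreasing[OF assms(2)])
    fix x assume x: "a \<le> x" "x \<le> b"
    have x0: "0 < x" "x < pi" using x assms pi_gt_zero by linarith+
    have sx: "0 < sin x" using x0 by (simp add: sin_gt_zero)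
    have slx: "sin x < x"
    proof -
      have c: "cos (x/2) < 1" using cos_monotone_0_pi[of 0 "x/2"] x0 by simp
      have s2: "0 < sin (x/2)" using x0 by (intro sin_gt_zero) auto
      have "sin x = 2 * sin (x/2) * cos (x/2)" using sin_double[of "x/2"] by simp
      also have "\<dots> < 2 * sin (x/2)" using c s2 by simp
      also have "\<dots> \<le> x" using sin_x_le_x[of "x/2"] x0 by simp
      finally show ?thesis .
    qed
    have "(?f has_real_derivative (-(sin x * sin x) - cos x * cos x)/(sin x * sin x) + 1/(x*x)) (at x)"
      using sx x0 by (auto intro!: derivative_eq_intros simp: power2_eq_square field_simps)
    moreover have "(-(sin x * sin x) - cos x * cos x)/(sin x * sin x) + 1/(x*x) < 0"
    proof -
      have e: "(-(sin x * sin x) - cos x * cos x) = -1" using sin_cos_squared_add[of x] by (simp add: power2_eq_square)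
      have "1/(x*x) < 1/(sin x * sin x)" using sx slx by (intro divide_strict_left_mono mult_strict_mono) auto
      thus ?thesis by (simp add: e)
    qed
    ultimately show "\<exists>y. DERIV ?f x :> y \<and> y < 0" by blast
  qed
  thus ?thesis by (simp add: cot_def)
qed

lemma phi_inc: fixes a b::real assumes "0 < a" "a \<le> b" "b \<le> pi/2"
  shows "1/sin a - 1/a \<le> 1/sin b - 1/b"
proof -
  let ?f = "\<lambda>t. 1 / sin t - 1/t"
  have d: "\<exists>y. DERIV ?f x :> y \<and> y \<ge> 0" if x: "a \<le> x" "x \<le> b" for x
  proof -
    have x0: "0 < x" "x \<le> pi/2" using x assms by linarith+
    have sx: "0 < sin x" using x0 by (intro sin_gt_zero) auto
    have "(?f has_real_derivative (- cos x/(sin x * sin x) + 1/(x*x))) (at x)"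
      using sx x0 by (auto intro!: derivative_eq_intros simp: power2_eq_square field_simps)
    moreover have "- cos x/(sin x * sin x) + 1/(x*x) \<ge> 0"
    proof -
      have k: "x^2 * cos x \<le> (sin x)^2" using key_ineq x0 by auto
      have "cos x/(sin x * sin x) \<le> 1/(x*x)" using k sx x0
        by (simp add: divide_simps power2_eq_square mult.commute)
      thus ?thesis by simp
    qed
    ultimately show ?thesis by blast
  qed
  have "?f a \<le> ?f b" by (rule DERIV_nonneg_imp_nondecreasing[where f="?f", OF assms(2)]) (use d in auto)
  thus ?thesis by simp
qed

definition AA :: "nat \<Rightarrow> real" where "AA x = cot (pi / real x) - real x / pi"
definition BB :: "nat \<Rightarrow> real" where "BB x = 1 / sin (pi / real x) - real x / pi"

lemma AA_mono: assumes "2 \<le> x" "x < y" shows "AA x < AA y"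
proof -
  have "cot (pi/real x) - 1/(pi/real x) < cot (pi/real y) - 1/(pi/real y)"
    using assms by (intro psi_dec) (auto simp: field_simps)
  thus ?thesis by (simp add: AA_def)
qed

lemma BB_mono: assumes "2 \<le> x" "x \<le> y" shows "BB y \<le> BB x"
proof -
  have "1/sin (pi/real y) - 1/(pi/real y) \<le> 1/sin (pi/real x) - 1/(pi/real x)"
    using assms by (intro phi_inc) (auto simp: field_simps)
  thus ?thesis by (simp add: BB_def)
qed

lemma alg: fixes c s a b d :: real assumes "b = d - a" shows "2*c + 2*s = 2*(c - a) + 2*(s - b) + 2*d" using assms by simp

lemma m2: assumes "r mod 4 = 2" "r \<le> n" "n mod 4 = (0::nat)" shows "(n - r) mod 4 = 2"
proof -
  obtain a where a: "n = 4*a" using assms(3) by auto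
  obtain b where b: "r = 4*b + 2" using assms(1) by (metis div_mult_mod_eq mult.commute)
  have "b < a" using a b assms(2) by linarith
  define c where "c = a - b - 1"
  have "n - r = 4*c + 2" using a b \<open>b < a\<close> unfolding c_def by simp
  moreover have "(4*c + 2) mod 4 = (2::nat)" by presburger
  ultimately show ?thesis by simp
qed
lemma E_0: assumes "r mod 4 = 0" "r \<le> n" "n mod 4 = 0"
  shows "E_D_pos_neg n r (n-r) = 2*AA r + 2*BB (n-r) + 2*(real n/pi)"
proof -
  have m: "(n - r) mod 4 = 0" using assms by presburger
  have e: "E_D_pos_neg n r (n-r) = 2*cot(pi/real r) + 2*(1/sin(pi/real(n-r)))"
    using m assms(1) by (simp add: E_D_pos_neg_def E_pos_cycle_def E_neg_cycle_def)
  have h: "real(n-r)/pi = real n/pi - real r/pi" using assms(2) by (simp add: of_nat_diff diff_divide_distrib)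
  show ?thesis unfolding AA_def BB_def e by (rule alg[OF h])
qed
lemma E_2: assumes "r mod 4 = 2" "r \<le> n" "n mod 4 = 0"
  shows "E_D_pos_neg n r (n-r) = 2*BB r + 2*AA (n-r) + 2*(real n/pi)"
proof -
  have m: "(n - r) mod 4 = 2" using assms by (rule m2)
  have e: "E_D_pos_neg n r (n-r) = 2*(1/sin(pi/real r)) + 2*cot(pi/real(n-r))"
    using m assms(1) by (simp add: E_D_pos_neg_def E_pos_cycle_def E_neg_cycle_def)
  have h: "real(n-r)/pi = real n/pi - real r/pi" using assms(2) by (simp add: of_nat_diff diff_divide_distrib)
  show ?thesis unfolding AA_def BB_def e by (rule alg[OF h])
qed
theorem lemma3p3:
  fixes n :: nat
  assumes "n > 5" and "n mod 4 = 0"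
  shows "(\<forall>r1 r2. even r1 \<and> even r2 \<and> 2 \<le> r1 \<and> r2 \<le> n - 2 \<and>
            r1 mod 4 = 0 \<and> r2 mod 4 = 0 \<and> r1 < r2 \<longrightarrow>
            E_D_pos_neg n r1 (n - r1) < E_D_pos_neg n r2 (n - r2))
       \<and> (\<forall>r. even r \<and> 2 \<le> r \<and> r \<le> n - 2 \<and> r mod 4 = 0 \<longrightarrow>
            E_D_pos_neg n r (n - r) \<le> E_D_pos_neg n (n - 4) 4)
       \<and> (\<forall>r1 r2. even r1 \<and> even r2 \<and> 2 \<le> r1 \<and> r2 \<le> n - 2 \<and>
            r1 mod 4 = 2 \<and> r2 mod 4 = 2 \<and> r1 < r2 \<longrightarrow>
            E_D_pos_neg n r2 (n - r2) < E_D_pos_neg n r1 (n - r1))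
       \<and> (\<forall>r. even r \<and> 2 \<le> r \<and> r \<le> n - 2 \<and> r mod 4 = 2 \<longrightarrow>
            E_D_pos_neg n r (n - r) \<le> E_D_pos_neg n 2 (n - 2))"
proof -
  have P1: "E_D_pos_neg n r1 (n - r1) < E_D_pos_neg n r2 (n - r2)"
    if "2 \<le> r1" "r2 \<le> n - 2" "r1 mod 4 = 0" "r2 mod 4 = 0" "r1 < r2" for r1 r2
  proof -
    have le: "r1 \<le> n" "r2 \<le> n" using that by linarith+
    have "AA r1 < AA r2" using that by (intro AA_mono) auto
    moreover have "BB (n - r1) \<le> BB (n - r2)" using that assms by (intro BB_mono) linarith+
    moreover have "E_D_pos_neg n r1 (n-r1) = 2*AA r1 + 2*BB (n-r1) + 2*(real n/pi)" by (rule E_0) (use that le assms in auto)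
    moreover have "E_D_pos_neg n r2 (n-r2) = 2*AA r2 + 2*BB (n-r2) + 2*(real n/pi)" by (rule E_0) (use that le assms in auto)
    ultimately show ?thesis by linarith
  qed
  have P2: "E_D_pos_neg n r2 (n - r2) < E_D_pos_neg n r1 (n - r1)"
    if "2 \<le> r1" "r2 \<le> n - 2" "r1 mod 4 = 2" "r2 mod 4 = 2" "r1 < r2" for r1 r2
  proof -
    have le: "r1 \<le> n" "r2 \<le> n" using that by linarith+
    have "AA (n - r2) < AA (n - r1)" using that assms by (intro AA_mono) linarith+
    moreover have "BB r2 \<le> BB r1" using that by (intro BB_mono) auto
    moreover have "E_D_pos_neg n r1 (n-r1) = 2*BB r1 + 2*AA (n-r1) + 2*(real n/pi)" by (rule E_2) (use that le assms in auto)
    moreover have "E_D_pos_neg n r2 (n-r2) = 2*BB r2 + 2*AA (n-r2) + 2*(real n/pi)" by (rule E_2) (use that le assms in auto)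
    ultimately show ?thesis by linarith
  qed
  have n4: "n - (n - 4) = 4" using assms by auto
  have Q1: "E_D_pos_neg n r (n - r) \<le> E_D_pos_neg n (n - 4) 4"
    if hr: "2 \<le> r" "r \<le> n - 2" "r mod 4 = 0" for r
  proof (cases "r = n - 4")
    case True thus ?thesis using n4 by simp
  next
    case False
    obtain a where a: "n = 4*a" using assms(2) by auto
    obtain b where b: "r = 4*b" using hr(3) by auto
    have "a \<ge> 2" using a assms(1) by linarith
    have "b < a" using a b hr(2) assms(1) by linarith
    have "b \<noteq> a - 1" using a b False by (auto simp: right_diff_distrib')
    hence "b + 2 \<le> a" using \<open>b < a\<close> by linarith
    hence "r < n - 4" using a b by linarith
    moreover have "(n - 4) mod 4 = 0" using a \<open>a \<ge> 2\<close> by (simp add: mult_2_right[symmetric] right_diff_distrib'[symmetric])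
    ultimately have "E_D_pos_neg n r (n - r) < E_D_pos_neg n (n - 4) (n - (n - 4))"
      using hr by (intro P1) auto
    thus ?thesis using n4 by simp
  qed
  have Q2: "E_D_pos_neg n r (n - r) \<le> E_D_pos_neg n 2 (n - 2)"
    if "2 \<le> r" "r \<le> n - 2" "r mod 4 = 2" for r
  proof (cases "r = 2")
    case True thus ?thesis by simp
  next
    case False
    hence "2 < r" using that by auto
    have "E_D_pos_neg n r (n - r) < E_D_pos_neg n 2 (n - 2)"
      by (rule P2[of 2 r]) (use that \<open>2 < r\<close> in auto)
    thus ?thesis by (rule less_imp_le)
  qed
  show ?thesis
    apply (intro conjI allI impI)
       apply (elim conjE, rule P1; assumption)
      apply (elim conjE, rule Q1; assumption)
     apply (elim conjE, rule P2; assumption)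
    apply (elim conjE, rule Q2; assumption)
    done
qed

end
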